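(* If $X$ is a core compact well-filtered space, then the upper Vietoris topology and the Scott topology on $\mathsf{K}(X)$ coincide.
   Context: Spaces are $T_0$; specialization order $x\le y$ iff $x\in\overline{\{y\}}$; saturated = upper set. $\mathsf{K}(X)$ = nonempty compact saturated subsets ordered by reverse inclusion. Scott topology on a poset: upper sets $U$ such that every directed $D$ whose supremum exists and lies in $U$ meets $U$. Upper Vietoris topology on $\mathsf{K}(X)$: base $\Box U=\{K:K\subseteq U\}$, $U$ open. Well-filtered: for open $U$ and $\mathcal K\subseteq\mathsf{K}(X)$ filtered under inclusion, $\bigcap\mathcal K\subseteq U$ implies some $K\in\mathcal K$ lies in $U$. Core compact: the lattice of open sets of $X$ is a continuous lattice. *)

theory Defs
  imports "HOL-Analysis.Analysis"
begin

definition spec_le :: "'a topology \<Rightarrow> 'a \<Rightarrow> 'a \<Rightarrow> bool" where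
  "spec_le X x y \<longleftrightarrow> x \<in> X closure_of {y}"

definition saturated :: "'a topology \<Rightarrow> 'a set \<Rightarrow> bool" where
  "saturated X A \<longleftrightarrow> A \<subseteq> topspace X \<and>
     (\<forall>x\<in>A. \<forall>y\<in>topspace X. spec_le X x y \<longrightarrow> y \<in> A)"

definition KX :: "'a topology \<Rightarrow> 'a set set" where
  "KX X = {K. K \<noteq> {} \<and> compactin X K \<and> saturated X K}"

definition K_le :: "'a set \<Rightarrow> 'a set \<Rightarrow> bool" where
  "K_le K1 K2 \<longleftrightarrow> K2 \<subseteq> K1"

definition directed_in :: "'b set \<Rightarrow> ('b \<Rightarrow> 'b \<Rightarrow> bool) \<Rightarrow> 'b set \<Rightarrow> bool" where
  "directed_in P le D \<longleftrightarrow> D \<subseteq> P \<and> D \<noteq> {} \<and>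
     (\<forall>a\<in>D. \<forall>b\<in>D. \<exists>c\<in>D. le a c \<and> le b c)"

definition is_sup_in :: "'b set \<Rightarrow> ('b \<Rightarrow> 'b \<Rightarrow> bool) \<Rightarrow> 'b set \<Rightarrow> 'b \<Rightarrow> bool" where
  "is_sup_in P le D s \<longleftrightarrow> s \<in> P \<and> (\<forall>d\<in>D. le d s) \<and>
     (\<forall>u\<in>P. (\<forall>d\<in>D. le d u) \<longrightarrow> le s u)"

definition scott_open :: "'b set \<Rightarrow> ('b \<Rightarrow> 'b \<Rightarrow> bool) \<Rightarrow> 'b set \<Rightarrow> bool" where
  "scott_open P le U \<longleftrightarrow> U \<subseteq> P \<and>
     (\<forall>x\<in>U. \<forall>y\<in>P. le x y \<longrightarrow> y \<in> U) \<and>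
     (\<forall>D s. directed_in P le D \<and> is_sup_in P le D s \<and> s \<in> U \<longrightarrow> D \<inter> U \<noteq> {})"

definition Box :: "'a topology \<Rightarrow> 'a set \<Rightarrow> 'a set set" where
  "Box X U = {K \<in> KX X. K \<subseteq> U}"

definition upper_vietoris_open :: "'a topology \<Rightarrow> 'a set set \<Rightarrow> bool" where
  "upper_vietoris_open X W \<longleftrightarrow>
     (\<exists>\<B>. \<B> \<subseteq> {Box X U | U. openin X U} \<and> W = \<Union>\<B>)"

definition filtered_incl :: "'a set set \<Rightarrow> bool" where
  "filtered_incl \<K> \<longleftrightarrow> \<K> \<noteq> {} \<and> (\<forall>A\<in>\<K>. \<forall>B\<in>\<K>. \<exists>C\<in>\<K>. C \<subseteq> A \<and> C \<subseteq> B)"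

definition well_filtered :: "'a topology \<Rightarrow> bool" where
  "well_filtered X \<longleftrightarrow>
     (\<forall>U \<K>. openin X U \<and> \<K> \<subseteq> KX X \<and> filtered_incl \<K> \<and> \<Inter>\<K> \<subseteq> U
        \<longrightarrow> (\<exists>K\<in>\<K>. K \<subseteq> U))"

text \<open>Core compactness: the lattice of open sets (ordered by inclusion) is continuous.\<close>
definition opens_of :: "'a topology \<Rightarrow> 'a set set" where
  "opens_of X = {U. openin X U}"

definition way_below_open :: "'a topology \<Rightarrow> 'a set \<Rightarrow> 'a set \<Rightarrow> bool" where
  "way_below_open X U V \<longleftrightarrow>
     (\<forall>D. directed_in (opens_of X) (\<subseteq>) D \<and> V \<subseteq> \<Union>D \<longrightarrow> (\<exists>W\<in>D. U \<subseteq> W))"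

definition core_compact :: "'a topology \<Rightarrow> bool" where
  "core_compact X \<longleftrightarrow>
     (\<forall>V. openin X V \<longrightarrow>
        directed_in (opens_of X) (\<subseteq>) {U. openin X U \<and> way_below_open X U V} \<and>
        V = \<Union>{U. openin X U \<and> way_below_open X U V})"

end

theory Submission
  imports Defs
begin

lemma spec_refl: "x \<in> topspace X \<Longrightarrow> spec_le X x x"
  unfolding spec_le_def by (meson closure_of_subset empty_subsetI insert_subset)

lemma spec_open: "spec_le X x y \<Longrightarrow> openin X Op \<Longrightarrow> x \<in> Op \<Longrightarrow> y \<in> Op"
  unfolding spec_le_def in_closure_of by blast

lemma spec_trans: "spec_le X x y \<Longrightarrow> spec_le X y z \<Longrightarrow> spec_le X x z"
  unfolding spec_le_def in_closure_of by blast

lemma wb_subset: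
  assumes "openin X V" "way_below_open X P V" shows "P \<subseteq> V"
proof -
  have "directed_in (opens_of X) (\<subseteq>) {V} \<and> V \<subseteq> \<Union>{V}"
    using assms(1) unfolding directed_in_def opens_of_def by simp
  then have "\<exists>W\<in>{V}. P \<subseteq> W" using assms(2) unfolding way_below_open_def by (elim allE impE)
  then show ?thesis by simp
qed

lemma wb_mono_left:
  assumes "P' \<subseteq> P" "way_below_open X P V" shows "way_below_open X P' V"
  unfolding way_below_open_def
proof (intro allI impI)
  fix D assume "directed_in (opens_of X) (\<subseteq>) D \<and> V \<subseteq> \<Union> D"
  then have "\<exists>W\<in>D. P \<subseteq> W" using assms(2) unfolding way_below_open_def by (elim allE impE)
  then obtain W where "W \<in> D" "P \<subseteq> W" by (rule bexE)
  moreover have "P' \<subseteq> W" using assms(1) \<open>P \<subseteq> W\<close> by (rule subset_trans)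
  ultimately show "\<exists>W\<in>D. P' \<subseteq> W" by blast
qed

lemma wb_mono_right:
  assumes "way_below_open X P V" "V \<subseteq> V'" shows "way_below_open X P V'"
  unfolding way_below_open_def
proof (intro allI impI)
  fix D assume H: "directed_in (opens_of X) (\<subseteq>) D \<and> V' \<subseteq> \<Union> D"
  then have "directed_in (opens_of X) (\<subseteq>) D \<and> V \<subseteq> \<Union> D" using assms(2) by auto
  then show "\<exists>W\<in>D. P \<subseteq> W" using assms(1) unfolding way_below_open_def by (elim allE impE)
qed

lemma wb_empty: "way_below_open X {} V"
  unfolding way_below_open_def directed_in_def by auto

lemma wb_union:
  assumes h1: "way_below_open X P1 V" and h2: "way_below_open X P2 V"
  shows "way_below_open X (P1 \<union> P2) V"
  unfolding way_below_open_def
proof (intro allI impI)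
  fix D assume H: "directed_in (opens_of X) (\<subseteq>) D \<and> V \<subseteq> \<Union> D"
  obtain W1 where W1: "W1 \<in> D" "P1 \<subseteq> W1" using h1 H unfolding way_below_open_def by blast
  obtain W2 where W2: "W2 \<in> D" "P2 \<subseteq> W2" using h2 H unfolding way_below_open_def by blast
  have "\<forall>a\<in>D. \<forall>b\<in>D. \<exists>c\<in>D. a \<subseteq> c \<and> b \<subseteq> c" using H unfolding directed_in_def by simp
  then obtain W3 where W3: "W3 \<in> D" "W1 \<subseteq> W3" "W2 \<subseteq> W3" using W1(1) W2(1) by blast
  have "P1 \<union> P2 \<subseteq> W3" using W1(2) W2(2) W3(2,3) by auto
  then show "\<exists>W\<in>D. P1 \<union> P2 \<subseteq> W" using W3(1) by blast
qed

lemma wb_Union: "finite F \<Longrightarrow> (\<forall>P\<in>F. way_below_open X P V) \<Longrightarrow> way_below_open X (\<Union>F) V"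
  by (induction F rule: finite_induct) (auto intro: wb_empty wb_union)

lemma ccD:
  assumes "core_compact X" "openin X V"
  shows "directed_in (opens_of X) (\<subseteq>) {U. openin X U \<and> way_below_open X U V} \<and>
        V = \<Union>{U. openin X U \<and> way_below_open X U V}"
  using assms(1)[unfolded core_compact_def, rule_format, OF assms(2)] .

lemma wb_exists:
  assumes cc: "core_compact X" and K: "compactin X K" and V: "openin X V" and KV: "K \<subseteq> V"
  shows "\<exists>P. openin X P \<and> K \<subseteq> P \<and> way_below_open X P V"
proof -
  let ?W = "{U. openin X U \<and> way_below_open X U V}"
  have eq: "V = \<Union>?W" using ccD[OF cc V] by (rule conjunct2)
  have "\<forall>U\<in>?W. openin X U" by blast
  moreover have "K \<subseteq> \<Union>?W" using KV by (subst eq[symmetric])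
  ultimately obtain F where F: "finite F" "F \<subseteq> ?W" "K \<subseteq> \<Union>F"
    using K unfolding compactin_def by meson
  have "openin X (\<Union>F)" using F(2) by (intro openin_Union) blast
  moreover have "way_below_open X (\<Union>F) V" using F(1) by (rule wb_Union) (use F(2) in blast)
  ultimately show ?thesis using F(3) by blast
qed

lemma wb_interp:
  assumes cc: "core_compact X" and V: "openin X V" and P: "way_below_open X P V"
  shows "\<exists>W. openin X W \<and> way_below_open X P W \<and> way_below_open X W V"
proof -
  let ?W = "{U. openin X U \<and> way_below_open X U V}"
  have dW: "directed_in (opens_of X) (\<subseteq>) ?W" and eq: "V = \<Union>?W"
    using ccD[OF cc V] by (rule conjunct1, rule conjunct2)
  let ?D = "{W'. openin X W' \<and> (\<exists>W\<in>?W. way_below_open X W' W)}"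
  have dD: "directed_in (opens_of X) (\<subseteq>) ?D"
  proof -
    have s1: "?D \<subseteq> opens_of X" by (auto simp: opens_of_def)
    have "?W \<noteq> {}" using dW unfolding directed_in_def by (elim conjE)
    then have "\<exists>W0. W0 \<in> ?W" by (rule ex_in_conv[THEN iffD2])
    then obtain W0 where W0: "W0 \<in> ?W" by (rule exE)
    have "{} \<in> ?D" using W0 wb_empty by auto
    then have s2: "?D \<noteq> {}" by (rule ex_in_conv[THEN iffD1, OF exI])
    have dir: "\<forall>a\<in>?W. \<forall>b\<in>?W. \<exists>c\<in>?W. a \<subseteq> c \<and> b \<subseteq> c"
      using dW unfolding directed_in_def by (elim conjE)
    have s3: "\<forall>a\<in>?D. \<forall>b\<in>?D. \<exists>c\<in>?D. a \<subseteq> c \<and> b \<subseteq> c"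
    proof (intro ballI)
      fix a b assume a: "a \<in> ?D" and b: "b \<in> ?D"
      obtain W1 where W1: "W1 \<in> ?W" "way_below_open X a W1" using a by blast
      obtain W2 where W2: "W2 \<in> ?W" "way_below_open X b W2" using b by blast
      obtain W3 where W3: "W3 \<in> ?W" "W1 \<subseteq> W3" "W2 \<subseteq> W3"
        using dir W1(1) W2(1) by blast
      have wab: "way_below_open X (a \<union> b) W3"
        using wb_union[OF wb_mono_right[OF W1(2) W3(2)] wb_mono_right[OF W2(2) W3(3)]] .
      have oab: "openin X (a \<union> b)" using a b by auto
      have "a \<union> b \<in> ?D" using oab wab W3(1) by blast
      moreover have "a \<subseteq> a \<union> b" "b \<subseteq> a \<union> b" by auto
      ultimately show "\<exists>c\<in>?D. a \<subseteq> c \<and> b \<subseteq> c" by blast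
    qed
    show ?thesis unfolding directed_in_def using s1 s2 s3 by (intro conjI)
  qed
  have "V \<subseteq> \<Union>?D"
  proof
    fix x assume "x \<in> V"
    have "x \<in> \<Union>?W" using \<open>x \<in> V\<close> by (subst eq[symmetric])
    then obtain W where W: "W \<in> ?W" "x \<in> W" by (rule UnionE)
    have eqW: "W = \<Union>{U. openin X U \<and> way_below_open X U W}"
      by (rule ccD[OF cc, THEN conjunct2]) (use W in simp)
    have "x \<in> \<Union>{U. openin X U \<and> way_below_open X U W}" using W(2) by (subst eqW[symmetric])
    then obtain W' where W': "W' \<in> {U. openin X U \<and> way_below_open X U W}" "x \<in> W'" by (rule UnionE)
    have "W' \<in> ?D" using W' W(1) by blast
    then show "x \<in> \<Union>?D" using W'(2) by (rule UnionI)
  qed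
  then have "directed_in (opens_of X) (\<subseteq>) ?D \<and> V \<subseteq> \<Union>?D" using dD by (intro conjI)
  then have "\<exists>W'\<in>?D. P \<subseteq> W'" by (rule P[unfolded way_below_open_def, rule_format])
  then obtain W' where "W' \<in> ?D" "P \<subseteq> W'" by (rule bexE)
  then obtain W where W: "W \<in> ?W" "way_below_open X W' W" by blast
  have "way_below_open X P W" using wb_mono_left[OF \<open>P \<subseteq> W'\<close> W(2)] .
  moreover have "openin X W" "way_below_open X W V" using W(1) by simp_all
  ultimately show ?thesis by blast
qed


lemma wb_Suc_sub:
  assumes "\<And>n. openin X (U n)" "\<And>n. way_below_open X (U (Suc n)) (U n)"
  shows "m \<le> n \<Longrightarrow> U n \<subseteq> U m"
proof -
  have "\<And>n. U (Suc n) \<subseteq> U n" by (rule wb_subset[OF assms(1) assms(2)])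
  then show "m \<le> n \<Longrightarrow> U n \<subseteq> U m" by (rule lift_Suc_antimono_le)
qed

definition upc :: "'a topology \<Rightarrow> 'a set \<Rightarrow> 'a set" where
  "upc X S = {y \<in> topspace X. \<exists>a\<in>S. spec_le X a y}"

lemma upc_saturated: "saturated X (upc X S)"
  unfolding saturated_def
proof (intro conjI ballI impI)
  show "upc X S \<subseteq> topspace X" unfolding upc_def by auto
  fix x y assume x: "x \<in> upc X S" and y: "y \<in> topspace X" and xy: "spec_le X x y"
  from x obtain a where a: "a \<in> S" "spec_le X a x" unfolding upc_def by auto
  have "spec_le X a y" using a(2) xy by (rule spec_trans)
  then show "y \<in> upc X S" using a(1) y unfolding upc_def by auto
qed

lemma upc_sub_open:
  assumes G: "openin X G" and S: "S \<subseteq> G" shows "upc X S \<subseteq> G"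
proof
  fix y assume "y \<in> upc X S"
  then obtain a where a: "a \<in> S" "spec_le X a y" unfolding upc_def by auto
  have "a \<in> G" using a(1) S by auto
  then show "y \<in> G" using spec_open[OF a(2) G] by simp
qed

lemma chain_union_not:
  assumes Uo: "\<And>n. openin X (U n)" and Uw: "\<And>n. way_below_open X (U (Suc n)) (U n)"
    and C: "C \<noteq> {}" "\<forall>Op\<in>C. openin X Op" "\<forall>Op\<in>C. \<forall>n. \<not> U n \<subseteq> Op"
    and ch: "\<forall>A\<in>C. \<forall>B\<in>C. A \<subseteq> B \<or> B \<subseteq> A"
  shows "\<not> U n \<subseteq> \<Union>C"
proof
  assume sub: "U n \<subseteq> \<Union>C"
  have s1: "C \<subseteq> opens_of X" using C(2) unfolding opens_of_def by auto
  have s3: "\<forall>a\<in>C. \<forall>b\<in>C. \<exists>c\<in>C. a \<subseteq> c \<and> b \<subseteq> c"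
  proof (intro ballI)
    fix a b assume ab: "a \<in> C" "b \<in> C"
    show "\<exists>c\<in>C. a \<subseteq> c \<and> b \<subseteq> c"
    proof (cases "a \<subseteq> b")
      case True then show ?thesis using ab(2) by auto
    next
      case False then have "b \<subseteq> a" using ch ab by auto
      then show ?thesis using ab(1) by auto
    qed
  qed
  have "directed_in (opens_of X) (\<subseteq>) C \<and> U n \<subseteq> \<Union>C"
    unfolding directed_in_def using s1 C(1) s3 sub by (intro conjI)
  then have "\<exists>W\<in>C. U (Suc n) \<subseteq> W" using Uw[of n] unfolding way_below_open_def by (elim allE impE)
  then obtain W where "W \<in> C" "U (Suc n) \<subseteq> W" by (rule bexE)
  then show False using C(3) by auto
qed

lemma key_Z:
  assumes wf: "well_filtered X"
    and Uo: "\<And>n. openin X (U n)" and Uw: "\<And>n. way_below_open X (U (Suc n)) (U n)"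
    and G: "openin X G" and QG: "\<Inter>(range U) \<subseteq> G"
  shows "\<exists>n. U n \<subseteq> G"
proof (rule ccontr)
  assume nG: "\<not> (\<exists>n. U n \<subseteq> G)"
  have dec: "\<And>m n. m \<le> n \<Longrightarrow> U n \<subseteq> U m" using wb_Suc_sub[of X U, OF Uo Uw] by blast
  let ?F = "{Op. openin X Op \<and> G \<subseteq> Op \<and> (\<forall>n. \<not> U n \<subseteq> Op)}"
  have GF: "G \<in> ?F" using G nG by blast
  have "\<forall>C\<in>chains ?F. \<exists>Y\<in>?F. \<forall>Z\<in>C. Z \<subseteq> Y"
  proof
    fix C assume "C \<in> chains ?F"
    then have CF: "C \<subseteq> ?F" and ch: "\<forall>A\<in>C. \<forall>B\<in>C. A \<subseteq> B \<or> B \<subseteq> A"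
      unfolding chains_def chain_subset_def by blast+
    show "\<exists>Y\<in>?F. \<forall>Z\<in>C. Z \<subseteq> Y"
    proof (cases "C = {}")
      case True then show ?thesis using GF by blast
    next
      case False
      have "openin X (\<Union>C)" using CF by blast
      moreover have "G \<subseteq> \<Union>C" using CF False by blast
      moreover have "\<forall>n. \<not> U n \<subseteq> \<Union>C"
      proof
        fix n
        have c2: "\<forall>Op\<in>C. openin X Op" using CF by auto
        have c3: "\<forall>Op\<in>C. \<forall>n. \<not> U n \<subseteq> Op" using CF by auto
        show "\<not> U n \<subseteq> \<Union>C" by (rule chain_union_not[of X U, OF Uo Uw False c2 c3 ch])
      qed
      ultimately have "\<Union>C \<in> ?F" by blast
      then show ?thesis by blast
    qed
  qed
  then obtain M where MF: "M \<in> ?F" and Mmax: "\<forall>Y\<in>?F. M \<subseteq> Y \<longrightarrow> Y = M"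
    by (rule Zorn_Lemma2[THEN bexE]) blast
  have Mo: "openin X M" and GM: "G \<subseteq> M" and MU: "\<And>n. \<not> U n \<subseteq> M" using MF by blast+
  have grow: "\<exists>k. U k \<subseteq> M \<union> Op" if Op: "openin X Op" "\<not> Op \<subseteq> M" for Op
  proof (rule ccontr)
    assume nk: "\<not> (\<exists>k. U k \<subseteq> M \<union> Op)"
    have "openin X (M \<union> Op)" using Mo Op(1) by (rule openin_Un)
    moreover have "G \<subseteq> M \<union> Op" using GM by auto
    moreover have "\<forall>n. \<not> U n \<subseteq> M \<union> Op" using nk by auto
    ultimately have "M \<union> Op \<in> ?F" by simp
    moreover have "M \<subseteq> M \<union> Op" by auto
    ultimately have "M \<union> Op = M" using Mmax by auto
    then show False using Op(2) by auto
  qed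
  define a where "a n = (SOME x. x \<in> U n \<and> x \<notin> M)" for n
  have a: "a n \<in> U n" "a n \<notin> M" for n
  proof -
    have "\<exists>x. x \<in> U n \<and> x \<notin> M" using MU[of n] by auto
    then have "a n \<in> U n \<and> a n \<notin> M" unfolding a_def by (rule someI_ex)
    then show "a n \<in> U n" "a n \<notin> M" by auto
  qed
  have atop: "a n \<in> topspace X" for n using openin_subset[OF Uo[of n]] a(1)[of n] by auto
  define Kn where "Kn n = upc X (a ` {n..})" for n
  have Kdec: "m \<le> n \<Longrightarrow> Kn n \<subseteq> Kn m" for m n unfolding Kn_def upc_def by auto
  have aK: "a n \<in> Kn n" for n
  proof -
    have "spec_le X (a n) (a n)" using atop by (rule spec_refl)
    then show ?thesis unfolding Kn_def upc_def using atop by auto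
  qed
  have KU: "Kn n \<subseteq> U n" for n
  proof -
    have "a ` {n..} \<subseteq> U n"
    proof
      fix y assume "y \<in> a ` {n..}"
      then obtain m where "m \<ge> n" "y = a m" by auto
      then show "y \<in> U n" using a(1)[of m] dec[of n m] by auto
    qed
    then show ?thesis unfolding Kn_def by (rule upc_sub_open[OF Uo])
  qed
  have Kcomp: "compactin X (Kn n)" for n
    unfolding compactin_def
  proof (intro conjI allI impI)
    show "Kn n \<subseteq> topspace X" unfolding Kn_def upc_def by auto
    fix \<U> assume U: "(\<forall>U\<in>\<U>. openin X U) \<and> Kn n \<subseteq> \<Union>\<U>"
    have Uopen: "\<And>V. V \<in> \<U> \<Longrightarrow> openin X V" using U by auto
    have Kcov: "Kn n \<subseteq> \<Union>\<U>" using U by auto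
    have Oo: "openin X (\<Union>\<U>)" using Uopen by (intro openin_Union) auto
    have "a n \<in> \<Union>\<U>" using aK[of n] Kcov by auto
    then have "\<not> \<Union>\<U> \<subseteq> M" using a(2)[of n] by auto
    then obtain k where k: "U k \<subseteq> M \<union> \<Union>\<U>" using grow[OF Oo] by auto
    define j where "j = max k n"
    have Uj: "U j \<subseteq> M \<union> \<Union>\<U>" using k dec[of k j] unfolding j_def by auto
    let ?D = "{M \<union> \<Union>F | F. finite F \<and> F \<subseteq> \<U>}"
    have memD: "M \<union> \<Union>F \<in> ?D" if "finite F" "F \<subseteq> \<U>" for F
      unfolding mem_Collect_eq by (intro exI[of _ F] conjI refl that)
    have s1: "?D \<subseteq> opens_of X"
    proof
      fix x assume "x \<in> ?D"
      then obtain F where F: "x = M \<union> \<Union>F" "F \<subseteq> \<U>" by auto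
      have "openin X (\<Union>F)" using F(2) Uopen by (intro openin_Union) auto
      then have "openin X x" using F(1) Mo by auto
      then show "x \<in> opens_of X" unfolding opens_of_def by simp
    qed
    have s2: "?D \<noteq> {}"
    proof -
      have "M \<union> \<Union>{} \<in> ?D" by (rule memD) auto
      then show ?thesis by auto
    qed
    have s3: "\<forall>a\<in>?D. \<forall>b\<in>?D. \<exists>c\<in>?D. a \<subseteq> c \<and> b \<subseteq> c"
    proof (intro ballI)
      fix x y assume "x \<in> ?D" "y \<in> ?D"
      then obtain F1 F2 where F: "x = M \<union> \<Union>F1" "finite F1" "F1 \<subseteq> \<U>"
        "y = M \<union> \<Union>F2" "finite F2" "F2 \<subseteq> \<U>" by auto
      have "finite (F1 \<union> F2)" "F1 \<union> F2 \<subseteq> \<U>" using F by auto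
      then have "M \<union> \<Union>(F1 \<union> F2) \<in> ?D" by (rule memD)
      moreover have "x \<subseteq> M \<union> \<Union>(F1 \<union> F2)" "y \<subseteq> M \<union> \<Union>(F1 \<union> F2)" using F by auto
      ultimately show "\<exists>c\<in>?D. x \<subseteq> c \<and> y \<subseteq> c" by (intro bexI[of _ "M \<union> \<Union>(F1 \<union> F2)"] conjI)
    qed
    have s4: "U j \<subseteq> \<Union>?D"
    proof
      fix x assume "x \<in> U j"
      then have "x \<in> M \<or> x \<in> \<Union>\<U>" using Uj by auto
      then show "x \<in> \<Union>?D"
      proof
        assume "x \<in> M"
        moreover have "M \<union> \<Union>{} \<in> ?D" by (rule memD) auto
        ultimately show ?thesis by auto
      next
        assume "x \<in> \<Union>\<U>"
        then obtain V where V: "V \<in> \<U>" "x \<in> V" by auto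
        then have "M \<union> \<Union>{V} \<in> ?D" by (intro memD) auto
        then show ?thesis using V(2) by auto
      qed
    qed
    have "directed_in (opens_of X) (\<subseteq>) ?D \<and> U j \<subseteq> \<Union>?D"
      unfolding directed_in_def using s1 s2 s3 s4 by (intro conjI)
    then have "\<exists>W\<in>?D. U (Suc j) \<subseteq> W" using Uw[of j] unfolding way_below_open_def by (elim allE impE)
    then obtain F where F: "finite F" "F \<subseteq> \<U>" "U (Suc j) \<subseteq> M \<union> \<Union>F" by auto
    have ex: "\<exists>V. V \<in> \<U> \<and> a m \<in> V" if "m \<in> {n..j}" for m
    proof -
      have "spec_le X (a m) (a m)" using atop by (rule spec_refl)
      then have "a m \<in> Kn n" unfolding Kn_def upc_def using atop that by auto
      then show ?thesis using Kcov by auto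
    qed
    define f where "f m = (SOME V. V \<in> \<U> \<and> a m \<in> V)" for m
    have f: "f m \<in> \<U> \<and> a m \<in> f m" if "m \<in> {n..j}" for m
      unfolding f_def using ex[OF that] by (rule someI_ex)
    let ?F' = "F \<union> f ` {n..j}"
    have fin: "finite ?F'" using F(1) by auto
    have sub: "?F' \<subseteq> \<U>" using F(2) f by auto
    have "a ` {n..} \<subseteq> \<Union>?F'"
    proof
      fix y assume "y \<in> a ` {n..}"
      then obtain m where m: "m \<ge> n" "y = a m" by auto
      show "y \<in> \<Union>?F'"
      proof (cases "m \<le> j")
        case True
        then have "m \<in> {n..j}" using m(1) by auto
        then have "a m \<in> f m" "f m \<in> ?F'" using f[of m] by auto
        then show ?thesis using m(2) by auto
      next
        case False
        then have "a m \<in> U (Suc j)" using a(1)[of m] dec[of "Suc j" m] by auto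
        then have "a m \<in> \<Union>F" using F(3) a(2)[of m] by auto
        then show ?thesis using m(2) by auto
      qed
    qed
    moreover have "openin X (\<Union>?F')" using sub Uopen by (intro openin_Union) auto
    ultimately have "Kn n \<subseteq> \<Union>?F'" unfolding Kn_def by (intro upc_sub_open)
    then show "\<exists>\<F>. finite \<F> \<and> \<F> \<subseteq> \<U> \<and> Kn n \<subseteq> \<Union>\<F>" using fin sub by (intro exI[of _ ?F'] conjI)
  qed
  have KX: "Kn n \<in> KX X" for n
  proof -
    have "Kn n \<noteq> {}" using aK[of n] by auto
    moreover have "saturated X (Kn n)" unfolding Kn_def by (rule upc_saturated)
    ultimately show ?thesis unfolding KX_def using Kcomp[of n] by simp
  qed
  have KXr: "range Kn \<subseteq> KX X" using KX by auto
  have filt: "filtered_incl (range Kn)"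
    unfolding filtered_incl_def
  proof (intro conjI ballI)
    show "range Kn \<noteq> {}" by auto
    fix A B assume "A \<in> range Kn" "B \<in> range Kn"
    then obtain i j where "A = Kn i" "B = Kn j" by auto
    then show "\<exists>C\<in>range Kn. C \<subseteq> A \<and> C \<subseteq> B" using Kdec[of i "max i j"] Kdec[of j "max i j"] by auto
  qed
  have IG: "\<Inter>(range Kn) \<subseteq> G"
  proof
    fix y assume "y \<in> \<Inter>(range Kn)"
    then have "y \<in> U n" for n using KU[of n] by auto
    then have "y \<in> \<Inter>(range U)" by auto
    then show "y \<in> G" using QG by auto
  qed
  have "openin X G \<and> range Kn \<subseteq> KX X \<and> filtered_incl (range Kn) \<and> \<Inter>(range Kn) \<subseteq> G"
    using G KXr filt IG by (intro conjI)
  then have "\<exists>K\<in>range Kn. K \<subseteq> G" using wf unfolding well_filtered_def by (elim allE impE)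
  then obtain n where "Kn n \<subseteq> G" by auto
  then show False using aK[of n] a(2)[of n] GM by auto
qed

lemma local_comp:
  assumes cc: "core_compact X" and wf: "well_filtered X"
    and K: "K \<in> KX X" and V: "openin X V" and KV: "K \<subseteq> V"
  shows "\<exists>P Q. openin X P \<and> K \<subseteq> P \<and> P \<subseteq> Q \<and> Q \<subseteq> V \<and> Q \<in> KX X"
proof -
  have Kc: "compactin X K" and Kne: "K \<noteq> {}" using K unfolding KX_def by auto
  obtain P where P: "openin X P" "K \<subseteq> P" "way_below_open X P V"
    using wb_exists[OF cc Kc V KV] by blast
  define step where "step W = (SOME W'. openin X W' \<and> way_below_open X P W' \<and> way_below_open X W' W)" for W
  define U where "U = rec_nat V (\<lambda>_ W. step W)"
  have U0: "U 0 = V" and US: "U (Suc n) = step (U n)" for n unfolding U_def by simp_all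
  have inv: "openin X (U n) \<and> way_below_open X P (U n)" for n
  proof (induction n)
    case 0 then show ?case using U0 V P by simp
  next
    case (Suc n)
    have "\<exists>W'. openin X W' \<and> way_below_open X P W' \<and> way_below_open X W' (U n)"
      using wb_interp[OF cc conjunct1[OF Suc] conjunct2[OF Suc]] .
    then have "openin X (step (U n)) \<and> way_below_open X P (step (U n)) \<and> way_below_open X (step (U n)) (U n)"
      unfolding step_def by (rule someI_ex)
    then show ?case using US by simp
  qed
  have Uo: "openin X (U n)" for n using inv[of n] by (rule conjunct1)
  have Uw: "way_below_open X (U (Suc n)) (U n)" for n
  proof -
    have "\<exists>W'. openin X W' \<and> way_below_open X P W' \<and> way_below_open X W' (U n)"
      using wb_interp[OF cc conjunct1[OF inv] conjunct2[OF inv]] .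
    then have "openin X (step (U n)) \<and> way_below_open X P (step (U n)) \<and> way_below_open X (step (U n)) (U n)"
      unfolding step_def by (rule someI_ex)
    then show ?thesis using US by simp
  qed
  define Q where "Q = \<Inter>(range U)"
  have PQ: "P \<subseteq> Q"
  proof -
    have "P \<subseteq> U n" for n using Uo conjunct2[OF inv] by (rule wb_subset)
    then show ?thesis unfolding Q_def by auto
  qed
  have QV: "Q \<subseteq> V" unfolding Q_def using U0 by auto
  have Qtop: "Q \<subseteq> topspace X" using QV openin_subset[OF V] by auto
  have Qsat: "saturated X Q"
    unfolding saturated_def Q_def
  proof (intro conjI ballI impI)
    show "\<Inter>(range U) \<subseteq> topspace X" using Qtop Q_def by simp
    fix x y assume "x \<in> \<Inter>(range U)" "y \<in> topspace X" "spec_le X x y"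
    then have "y \<in> U n" for n using spec_open[OF _ Uo[of n]] by auto
    then show "y \<in> \<Inter>(range U)" by auto
  qed
  have Qc: "compactin X Q"
    unfolding compactin_def
  proof (intro conjI allI impI)
    show "Q \<subseteq> topspace X" by (rule Qtop)
    fix \<U> assume H: "(\<forall>U\<in>\<U>. openin X U) \<and> Q \<subseteq> \<Union>\<U>"
    then have Oo: "openin X (\<Union>\<U>)" by (intro openin_Union) auto
    have "\<Inter>(range U) \<subseteq> \<Union>\<U>" using H unfolding Q_def by auto
    then obtain n where n: "U n \<subseteq> \<Union>\<U>" using key_Z[of X U, OF wf Uo Uw Oo] by auto
    let ?D = "{\<Union>F | F. finite F \<and> F \<subseteq> \<U>}"
    have memD: "\<Union>F \<in> ?D" if "finite F" "F \<subseteq> \<U>" for F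
      unfolding mem_Collect_eq by (intro exI[of _ F] conjI refl that)
    have dD: "directed_in (opens_of X) (\<subseteq>) ?D"
      unfolding directed_in_def
    proof (intro conjI)
      show "?D \<subseteq> opens_of X" unfolding opens_of_def using H by auto
      have "\<Union>{} \<in> ?D" by (rule memD) auto
      then show "?D \<noteq> {}" by auto
      show "\<forall>a\<in>?D. \<forall>b\<in>?D. \<exists>c\<in>?D. a \<subseteq> c \<and> b \<subseteq> c"
      proof (intro ballI)
        fix x y assume "x \<in> ?D" "y \<in> ?D"
        then obtain F1 F2 where F: "x = \<Union>F1" "finite F1" "F1 \<subseteq> \<U>"
          "y = \<Union>F2" "finite F2" "F2 \<subseteq> \<U>" by blast
        then have "\<Union>(F1 \<union> F2) \<in> ?D" by (intro memD) auto
        moreover have "x \<subseteq> \<Union>(F1 \<union> F2)" "y \<subseteq> \<Union>(F1 \<union> F2)" using F by auto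
        ultimately show "\<exists>c\<in>?D. x \<subseteq> c \<and> y \<subseteq> c" by (intro bexI[of _ "\<Union>(F1 \<union> F2)"] conjI)
      qed
    qed
    have "U n \<subseteq> \<Union>?D"
    proof
      fix x assume "x \<in> U n"
      then obtain V where "V \<in> \<U>" "x \<in> V" using n by auto
      then have "\<Union>{V} \<in> ?D" by (intro memD) auto
      then show "x \<in> \<Union>?D" using \<open>x \<in> V\<close> by auto
    qed
    then have "directed_in (opens_of X) (\<subseteq>) ?D \<and> U n \<subseteq> \<Union>?D" using dD by (intro conjI)
    then have "\<exists>W\<in>?D. U (Suc n) \<subseteq> W" using Uw[of n] unfolding way_below_open_def by (elim allE impE)
    then obtain F where F: "finite F" "F \<subseteq> \<U>" "U (Suc n) \<subseteq> \<Union>F" by auto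
    have "Q \<subseteq> U (Suc n)" unfolding Q_def by auto
    then have "Q \<subseteq> \<Union>F" using F(3) by auto
    then show "\<exists>\<F>. finite \<F> \<and> \<F> \<subseteq> \<U> \<and> Q \<subseteq> \<Union>\<F>" using F by (intro exI[of _ F] conjI)
  qed
  have "Q \<noteq> {}" using PQ P(2) Kne by auto
  then have "Q \<in> KX X" unfolding KX_def using Qc Qsat by simp
  then show ?thesis using P(1,2) PQ QV by (intro exI[of _ P] exI[of _ Q] conjI)
qed


lemma wf_inter:
  assumes wf: "well_filtered X" and D: "D \<subseteq> KX X" "filtered_incl D"
  shows "\<Inter>D \<in> KX X"
proof -
  have Dne: "D \<noteq> {}" using D(2) unfolding filtered_incl_def by auto
  then obtain d0 where d0: "d0 \<in> D" by auto
  have dK: "\<And>d. d \<in> D \<Longrightarrow> d \<noteq> {} \<and> compactin X d \<and> saturated X d"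
    using D(1) unfolding KX_def by auto
  have dtop: "\<And>d. d \<in> D \<Longrightarrow> d \<subseteq> topspace X" using dK unfolding compactin_def by auto
  have top: "\<Inter>D \<subseteq> topspace X" using dtop[OF d0] d0 by auto
  have WF: "\<And>U. openin X U \<Longrightarrow> \<Inter>D \<subseteq> U \<Longrightarrow> \<exists>K\<in>D. K \<subseteq> U"
  proof -
    fix U assume "openin X U" "\<Inter>D \<subseteq> U"
    then have "openin X U \<and> D \<subseteq> KX X \<and> filtered_incl D \<and> \<Inter>D \<subseteq> U" using D by (intro conjI)
    then show "\<exists>K\<in>D. K \<subseteq> U" using wf unfolding well_filtered_def by (elim allE impE)
  qed
  have ne: "\<Inter>D \<noteq> {}"
  proof
    assume "\<Inter>D = {}"
    then obtain d where "d \<in> D" "d \<subseteq> {}" using WF[of "{}"] by auto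
    then show False using dK by auto
  qed
  have comp: "compactin X (\<Inter>D)"
    unfolding compactin_def
  proof (intro conjI allI impI)
    show "\<Inter>D \<subseteq> topspace X" by (rule top)
    fix \<U> assume H: "(\<forall>U\<in>\<U>. openin X U) \<and> \<Inter>D \<subseteq> \<Union>\<U>"
    then have Oo: "openin X (\<Union>\<U>)" by (intro openin_Union) auto
    have "\<exists>K\<in>D. K \<subseteq> \<Union>\<U>" using WF[OF Oo conjunct2[OF H]] .
    then obtain d where d: "d \<in> D" "d \<subseteq> \<Union>\<U>" by auto
    then have "compactin X d" using dK by auto
    then have "\<exists>\<F>. finite \<F> \<and> \<F> \<subseteq> \<U> \<and> d \<subseteq> \<Union>\<F>"
      using d(2) H unfolding compactin_def by (elim conjE allE impE) auto
    then obtain F where F: "finite F" "F \<subseteq> \<U>" "d \<subseteq> \<Union>F" by auto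
    have "\<Inter>D \<subseteq> \<Union>F" using F(3) d(1) by auto
    then show "\<exists>\<F>. finite \<F> \<and> \<F> \<subseteq> \<U> \<and> \<Inter>D \<subseteq> \<Union>\<F>" using F by (intro exI[of _ F] conjI)
  qed
  have sat: "saturated X (\<Inter>D)"
    unfolding saturated_def
  proof (intro conjI ballI impI)
    show "\<Inter>D \<subseteq> topspace X" by (rule top)
    fix x y assume xy: "x \<in> \<Inter>D" "y \<in> topspace X" "spec_le X x y"
    show "y \<in> \<Inter>D"
    proof
      fix d assume "d \<in> D"
      then have "saturated X d" "x \<in> d" using dK xy(1) by auto
      then show "y \<in> d" using xy(2,3) unfolding saturated_def by auto
    qed
  qed
  show ?thesis unfolding KX_def using ne comp sat by simp
qed

theorem mainTheorem18:
  fixes X :: "'a topology"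
  assumes "t0_space X" and "core_compact X" and "well_filtered X"
  shows "\<forall>W. upper_vietoris_open X W \<longleftrightarrow> scott_open (KX X) K_le W"
proof (intro allI iffI)
  fix W assume "upper_vietoris_open X W"
  then obtain \<B> where B: "\<B> \<subseteq> {Box X U | U. openin X U}" "W = \<Union>\<B>"
    unfolding upper_vietoris_open_def by auto
  have Bx: "\<And>b. b \<in> \<B> \<Longrightarrow> \<exists>U. openin X U \<and> b = Box X U" using B(1) by auto
  show "scott_open (KX X) K_le W"
    unfolding scott_open_def
  proof (intro conjI allI impI ballI)
    show "W \<subseteq> KX X"
    proof
      fix x assume "x \<in> W"
      then obtain b where "b \<in> \<B>" "x \<in> b" using B(2) by auto
      then obtain U where "b = Box X U" using Bx by auto
      then show "x \<in> KX X" using \<open>x \<in> b\<close> unfolding Box_def by auto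
    qed
    fix x y assume xy: "x \<in> W" "y \<in> KX X" "K_le x y"
    then obtain b where "b \<in> \<B>" "x \<in> b" using B(2) by auto
    then obtain U where "b = Box X U" using Bx by auto
    then have "x \<subseteq> U" using \<open>x \<in> b\<close> unfolding Box_def by auto
    then have "y \<in> Box X U" using xy(2,3) unfolding Box_def K_le_def by auto
    then show "y \<in> W" using \<open>b \<in> \<B>\<close> \<open>b = Box X U\<close> B(2) by auto
  next
    fix D s assume H: "directed_in (KX X) K_le D \<and> is_sup_in (KX X) K_le D s \<and> s \<in> W"
    then obtain b where "b \<in> \<B>" "s \<in> b" using B(2) by auto
    then obtain U where U: "openin X U" "b = Box X U" using Bx by auto
    have sU: "s \<subseteq> U" using \<open>s \<in> b\<close> U(2) unfolding Box_def by auto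
    have DK: "D \<subseteq> KX X" using H unfolding directed_in_def by auto
    have filt: "filtered_incl D"
    proof -
      have "D \<noteq> {}" "\<forall>a\<in>D. \<forall>b\<in>D. \<exists>c\<in>D. K_le a c \<and> K_le b c"
        using H unfolding directed_in_def by auto
      then show ?thesis unfolding filtered_incl_def K_le_def by auto
    qed
    have I: "\<Inter>D \<in> KX X" by (rule wf_inter[OF assms(3) DK filt])
    have "\<forall>u\<in>KX X. (\<forall>d\<in>D. K_le d u) \<longrightarrow> K_le s u" using H unfolding is_sup_in_def by auto
    moreover have "\<forall>d\<in>D. K_le d (\<Inter>D)" unfolding K_le_def by auto
    ultimately have "K_le s (\<Inter>D)" using I by auto
    then have IU: "\<Inter>D \<subseteq> U" using sU unfolding K_le_def by auto
    have "openin X U \<and> D \<subseteq> KX X \<and> filtered_incl D \<and> \<Inter>D \<subseteq> U" using U(1) DK filt IU by (intro conjI)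
    then have "\<exists>K\<in>D. K \<subseteq> U" using assms(3) unfolding well_filtered_def by (elim allE impE)
    then obtain d where d: "d \<in> D" "d \<subseteq> U" by auto
    then have "d \<in> b" using DK U(2) unfolding Box_def by auto
    then have "d \<in> W" using \<open>b \<in> \<B>\<close> B(2) by auto
    then show "D \<inter> W \<noteq> {}" using d(1) by auto
  qed
next
  fix W assume S: "scott_open (KX X) K_le W"
  have WK: "W \<subseteq> KX X" using S unfolding scott_open_def by auto
  have up: "\<And>x y. x \<in> W \<Longrightarrow> y \<in> KX X \<Longrightarrow> y \<subseteq> x \<Longrightarrow> y \<in> W"
    using S unfolding scott_open_def K_le_def by auto
  have dirall: "\<forall>D s. directed_in (KX X) K_le D \<and> is_sup_in (KX X) K_le D s \<and> s \<in> W \<longrightarrow> D \<inter> W \<noteq> {}"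
    using S unfolding scott_open_def by (elim conjE)
  have dir: "\<And>D s. directed_in (KX X) K_le D \<Longrightarrow> is_sup_in (KX X) K_le D s \<Longrightarrow> s \<in> W \<Longrightarrow> D \<inter> W \<noteq> {}"
  proof -
    fix D s assume "directed_in (KX X) K_le D" "is_sup_in (KX X) K_le D s" "s \<in> W"
    then have "directed_in (KX X) K_le D \<and> is_sup_in (KX X) K_le D s \<and> s \<in> W" by (intro conjI)
    then show "D \<inter> W \<noteq> {}" by (rule dirall[rule_format])
  qed
  let ?B = "{Box X U | U. openin X U \<and> Box X U \<subseteq> W}"
  have "W = \<Union>?B"
  proof
    show "\<Union>?B \<subseteq> W" by auto
    show "W \<subseteq> \<Union>?B"
    proof
      fix K assume KW: "K \<in> W"
      then have K: "K \<in> KX X" using WK by auto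
      then have Ktop: "K \<subseteq> topspace X" and Ksat: "saturated X K"
        unfolding KX_def compactin_def by auto
      let ?F = "{Q \<in> KX X. \<exists>P. openin X P \<and> K \<subseteq> P \<and> P \<subseteq> Q}"
      have lc: "\<exists>Q. Q \<in> ?F \<and> Q \<subseteq> V" if Vh: "openin X V" "K \<subseteq> V" for V
      proof -
        obtain P Q where PQ: "openin X P" "K \<subseteq> P" "P \<subseteq> Q" "Q \<subseteq> V" "Q \<in> KX X"
          using local_comp[OF assms(2,3) K Vh] by auto
        then have "Q \<in> ?F" by auto
        then show ?thesis using PQ(4) by auto
      qed
      have dF: "directed_in (KX X) K_le ?F"
        unfolding directed_in_def K_le_def
      proof (intro conjI ballI)
        show "?F \<subseteq> KX X" by auto
        obtain Q where "Q \<in> ?F" using lc[of "topspace X"] Ktop by auto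
        then show "?F \<noteq> {}" by auto
        fix a b assume ab: "a \<in> ?F" "b \<in> ?F"
        then obtain Pa where Pa: "openin X Pa" "K \<subseteq> Pa" "Pa \<subseteq> a" by auto
        obtain Pb where Pb: "openin X Pb" "K \<subseteq> Pb" "Pb \<subseteq> b" using ab by auto
        have "openin X (Pa \<inter> Pb)" using Pa(1) Pb(1) by (rule openin_Int)
        then obtain Q where Q: "Q \<in> ?F" "Q \<subseteq> Pa \<inter> Pb" using lc[of "Pa \<inter> Pb"] Pa(2) Pb(2) by auto
        have "Q \<subseteq> a" "Q \<subseteq> b" using Q(2) Pa(3) Pb(3) by auto
        then show "\<exists>c\<in>?F. c \<subseteq> a \<and> c \<subseteq> b" using Q(1) by (intro bexI[of _ Q] conjI)
      qed
      have sF: "is_sup_in (KX X) K_le ?F K"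
        unfolding is_sup_in_def K_le_def
      proof (intro conjI ballI impI)
        show "K \<in> KX X" by (rule K)
        fix d assume "d \<in> ?F" then show "K \<subseteq> d" by auto
      next
        fix u assume u: "u \<in> KX X" "\<forall>d\<in>?F. u \<subseteq> d"
        have utop: "u \<subseteq> topspace X" using u(1) unfolding KX_def compactin_def by auto
        show "u \<subseteq> K"
        proof
          fix x assume xu: "x \<in> u"
          have xtop: "x \<in> topspace X" using xu utop by auto
          show "x \<in> K"
          proof (rule ccontr)
            assume xK: "x \<notin> K"
            let ?V = "topspace X - X closure_of {x}"
            have Vo: "openin X ?V" by (simp add: openin_diff)
            have KV: "K \<subseteq> ?V"
            proof
              fix k assume kK: "k \<in> K"
              have "\<not> spec_le X k x"
              proof
                assume "spec_le X k x"
                then have "x \<in> K" using Ksat kK xtop unfolding saturated_def by auto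
                then show False using xK by auto
              qed
              then show "k \<in> ?V" using Ktop kK unfolding spec_le_def by auto
            qed
            obtain Q where "Q \<in> ?F" "Q \<subseteq> ?V" using lc[OF Vo KV] by auto
            then have "x \<in> ?V" using u(2) xu by auto
            moreover have "x \<in> X closure_of {x}"
              using spec_refl[OF xtop] unfolding spec_le_def .
            ultimately show False by auto
          qed
        qed
      qed
      have "?F \<inter> W \<noteq> {}" using dir[OF dF sF KW] .
      then obtain Q where Q: "Q \<in> ?F" "Q \<in> W" by auto
      then obtain P where P: "openin X P" "K \<subseteq> P" "P \<subseteq> Q" by auto
      have "Box X P \<subseteq> W"
      proof
        fix C assume "C \<in> Box X P"
        then have "C \<in> KX X" "C \<subseteq> Q" using P(3) unfolding Box_def by auto
        then show "C \<in> W" using up[OF Q(2)] by auto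
      qed
      then have "Box X P \<in> ?B" using P(1) by auto
      moreover have "K \<in> Box X P" using K P(2) unfolding Box_def by auto
      ultimately show "K \<in> \<Union>?B" by auto
    qed
  qed
  moreover have "?B \<subseteq> {Box X U | U. openin X U}" by auto
  ultimately show "upper_vietoris_open X W"
    unfolding upper_vietoris_open_def by (intro exI[of _ ?B] conjI)
qed

end
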